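(* If $Y\subseteq 2^\omega$ is consonant, then Alice has no winning strategy in the grouped Menger game played on $2^\omega\setminus Y$.
   Context: A $k$-cover of $X$ is an open cover such that every compact subset of $X$ is contained in a member of the cover. In the game $G_1(\mathcal K,\mathcal O)$ on $X$, in round $n$ Alice picks an open $k$-cover $\mathcal U_n$ of $X$ and Bob picks $U_n\in\mathcal U_n$; Bob wins if $\{U_n:n\in\omega\}$ covers $X$, otherwise Alice wins. $Y\subseteq 2^\omega$ is consonant iff Alice has no winning strategy in $G_1(\mathcal K,\mathcal O)$ played on $2^\omega\setminus Y$. Grouped Menger game on $X\subseteq 2^\omega$: in each round $n\in\omega$ Alice selects a natural number $l_n>0$ and then the players play $l_n$ subrounds of the Menger game, indexed by $i\in[L_n,L_{n+1})$ where $L_0=0$, $L_{n+1}=l_0+\dots+l_n$: in subround $i$ Alice picks an open cover $\mathcal U_i$ of $X$ and Bob picks a finite $\mathcal F_i\subseteq\mathcal U_i$. Bob wins if $X=\bigcup_{n\in\omega}\bigcap_{i\in[L_n,L_{n+1})}\bigcup\mathcal F_i$; otherwise Alice wins. *)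

theory Defs
  imports "HOL-Analysis.Analysis"
begin

definition cantor_space :: "(nat \<Rightarrow> bool) topology" where
  "cantor_space = product_topology (\<lambda>_. discrete_topology UNIV) UNIV"

definition open_cover_of :: "'a topology \<Rightarrow> 'a set \<Rightarrow> 'a set set \<Rightarrow> bool" where
  "open_cover_of T X \<U> \<longleftrightarrow> (\<forall>U\<in>\<U>. openin (subtopology T X) U) \<and> \<Union>\<U> = X"

definition k_cover_of :: "'a topology \<Rightarrow> 'a set \<Rightarrow> 'a set set \<Rightarrow> bool" where
  "k_cover_of T X \<U> \<longleftrightarrow> open_cover_of T X \<U> \<and>
     (\<forall>K. K \<subseteq> X \<and> compactin (subtopology T X) K \<longrightarrow> (\<exists>U\<in>\<U>. K \<subseteq> U))"

definition alice_strategy_G1KO :: "'a topology \<Rightarrow> 'a set \<Rightarrow> ('a set list \<Rightarrow> 'a set set) \<Rightarrow> bool" where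
  "alice_strategy_G1KO T X \<sigma> \<longleftrightarrow> (\<forall>s. k_cover_of T X (\<sigma> s))"

definition play_G1KO :: "('a set list \<Rightarrow> 'a set set) \<Rightarrow> (nat \<Rightarrow> 'a set) \<Rightarrow> bool" where
  "play_G1KO \<sigma> U \<longleftrightarrow> (\<forall>n. U n \<in> \<sigma> (map U [0..<n]))"

definition alice_wins_G1KO :: "'a topology \<Rightarrow> 'a set \<Rightarrow> bool" where
  "alice_wins_G1KO T X \<longleftrightarrow> (\<exists>\<sigma>. alice_strategy_G1KO T X \<sigma> \<and>
      (\<forall>U. play_G1KO \<sigma> U \<longrightarrow> \<Union>(range U) \<noteq> X))"

definition consonant :: "(nat \<Rightarrow> bool) set \<Rightarrow> bool" where
  "consonant Y \<longleftrightarrow> \<not> alice_wins_G1KO cantor_space (UNIV - Y)"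

text \<open>Alice's strategy is a pair (lam, sigma): at the start of
  round n (i.e. after Bob's moves F_0..F_(L_n - 1)) she picks l_n = lam [F_0,...,F_(L_n - 1)] > 0;
  in subround i she plays the open cover sigma [F_0,...,F_(i-1)].\<close>
fun grp_L :: "('a set set list \<Rightarrow> nat) \<Rightarrow> (nat \<Rightarrow> 'a set set) \<Rightarrow> nat \<Rightarrow> nat" where
  "grp_L lam F 0 = 0"
| "grp_L lam F (Suc n) = grp_L lam F n + lam (map F [0..<grp_L lam F n])"

definition alice_strategy_grouped :: "'a topology \<Rightarrow> 'a set \<Rightarrow> ('a set set list \<Rightarrow> nat) \<Rightarrow>
    ('a set set list \<Rightarrow> 'a set set) \<Rightarrow> bool" where
  "alice_strategy_grouped T X lam \<sigma> \<longleftrightarrow> (\<forall>s. lam s > 0) \<and> (\<forall>s. open_cover_of T X (\<sigma> s))"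

definition play_grouped :: "('a set set list \<Rightarrow> 'a set set) \<Rightarrow> (nat \<Rightarrow> 'a set set) \<Rightarrow> bool" where
  "play_grouped \<sigma> F \<longleftrightarrow> (\<forall>i. finite (F i) \<and> F i \<subseteq> \<sigma> (map F [0..<i]))"

definition bob_wins_grouped :: "'a set \<Rightarrow> ('a set set list \<Rightarrow> nat) \<Rightarrow> (nat \<Rightarrow> 'a set set) \<Rightarrow> bool" where
  "bob_wins_grouped X lam F \<longleftrightarrow>
     X = (\<Union>n. \<Inter>i\<in>{grp_L lam F n..<grp_L lam F (Suc n)}. \<Union>(F i))"

definition alice_wins_grouped_menger :: "'a topology \<Rightarrow> 'a set \<Rightarrow> bool" where
  "alice_wins_grouped_menger T X \<longleftrightarrow> (\<exists>lam \<sigma>. alice_strategy_grouped T X lam \<sigma> \<and>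
      (\<forall>F. play_grouped \<sigma> F \<longrightarrow> \<not> bob_wins_grouped X lam F))"

end

theory Submission
  imports Defs
begin

definition gR :: "('a set set list \<Rightarrow> 'a set set) \<Rightarrow> 'a set set list \<Rightarrow> nat \<Rightarrow> 'a set set list set" where
  "gR \<sigma> h l = {r. length r = l \<and> (\<forall>j<l. finite (r!j) \<and> r!j \<subseteq> \<sigma> (h @ take j r))}"

definition gV :: "'a set set list \<Rightarrow> 'a set" where
  "gV r = \<Inter>(Union ` set r)"

definition gC :: "('a set set list \<Rightarrow> nat) \<Rightarrow> ('a set set list \<Rightarrow> 'a set set) \<Rightarrow> 'a set set list \<Rightarrow> 'a set set" where
  "gC lam \<sigma> h = gV ` gR \<sigma> h (lam h)"

definition gdec where
  "gdec lam \<sigma> h u = (SOME r. r \<in> gR \<sigma> h (lam h) \<and> gV r = u)"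

definition gH where
  "gH lam \<sigma> us = foldl (\<lambda>h u. h @ gdec lam \<sigma> h u) [] us"

lemma exists_resp:
  assumes cov: "\<forall>s. open_cover_of T X (\<sigma> s)"
    and K: "compactin (subtopology T X) K"
  shows "\<exists>r. r \<in> gR \<sigma> h l \<and> (\<forall>j<l. K \<subseteq> \<Union>(r!j))"
proof (induction l)
  case 0
  then show ?case by (auto simp: gR_def)
next
  case (Suc l)
  then obtain r where r: "r \<in> gR \<sigma> h l" "\<forall>j<l. K \<subseteq> \<Union>(r!j)" by blast
  have "\<forall>U\<in>\<sigma> (h @ r). openin (subtopology T X) U" "\<Union>(\<sigma> (h @ r)) = X"
    using cov by (auto simp: open_cover_of_def)
  moreover have "K \<subseteq> X" using compactin_subset_topspace[OF K] by auto
  ultimately obtain f where f: "finite f" "f \<subseteq> \<sigma> (h @ r)" "K \<subseteq> \<Union>f"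
    using K unfolding compactin_def by (metis order_refl)
  have "r @ [f] \<in> gR \<sigma> h (Suc l)"
    using r f unfolding gR_def
    by (auto simp: nth_append less_Suc_eq)
  moreover have "\<forall>j<Suc l. K \<subseteq> \<Union>((r @ [f])!j)"
    using r f unfolding gR_def by (auto simp: nth_append less_Suc_eq)
  ultimately show ?case by blast
qed

lemma kcover:
  assumes A: "alice_strategy_grouped T X lam \<sigma>"
  shows "k_cover_of T X (gC lam \<sigma> h)"
proof -
  have cov: "\<forall>s. open_cover_of T X (\<sigma> s)" and pos: "\<forall>s. lam s > 0"
    using A by (auto simp: alice_strategy_grouped_def)
  have opn: "openin (subtopology T X) (gV r)" if "r \<in> gR \<sigma> h (lam h)" for r
  proof -
    have "set r \<noteq> {}" using that pos[rule_format, of h] by (auto simp: gR_def)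
    moreover have "openin (subtopology T X) (\<Union>(r!j))" if "j < length r" for j
    proof -
      have "r!j \<subseteq> \<sigma> (h @ take j r)" using \<open>r \<in> _\<close> that by (auto simp: gR_def)
      then show ?thesis using cov by (auto simp: open_cover_of_def)
    qed
    ultimately show ?thesis unfolding gV_def
      by (intro openin_Inter) (auto simp: in_set_conv_nth)
  qed
  have sub: "\<exists>U\<in>gC lam \<sigma> h. K \<subseteq> U" if K: "compactin (subtopology T X) K" for K
  proof -
    obtain r where r: "r \<in> gR \<sigma> h (lam h)" "\<forall>j<lam h. K \<subseteq> \<Union>(r!j)"
      using exists_resp[OF cov K] by blast
    have "K \<subseteq> \<Union>(r!j)" if "j < length r" for j using r that unfolding gR_def by auto
    then have "K \<subseteq> gV r" unfolding gV_def by (metis Inter_greatest imageE in_set_conv_nth)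
    then show ?thesis using r unfolding gC_def by blast
  qed
  have un: "\<Union>(gC lam \<sigma> h) = X"
  proof
    show "\<Union>(gC lam \<sigma> h) \<subseteq> X"
      using opn unfolding gC_def by (metis UN_least image_Union openin_imp_subset topspace_subtopology_subset le_inf_iff openin_subset topspace_subtopology)
  next
    show "X \<subseteq> \<Union>(gC lam \<sigma> h)"
    proof
      fix x assume x: "x \<in> X"
      have "\<Union>(\<sigma> []) = X" "\<forall>U\<in>\<sigma> []. openin (subtopology T X) U"
        using cov by (auto simp: open_cover_of_def)
      then obtain V where "V \<in> \<sigma> []" "x \<in> V" "openin (subtopology T X) V" using x by auto
      then have "x \<in> topspace (subtopology T X)" using openin_subset by blast
      then obtain U where "U \<in> gC lam \<sigma> h" "{x} \<subseteq> U" using sub[of "{x}"] by auto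
      then show "x \<in> \<Union>(gC lam \<sigma> h)" by auto
    qed
  qed
  show ?thesis unfolding k_cover_of_def open_cover_of_def
    using opn un sub unfolding gC_def by auto
qed

lemma grouped_to_G1:
  assumes "alice_wins_grouped_menger T X"
  shows "alice_wins_G1KO T X"
proof -
  obtain lam \<sigma> where A: "alice_strategy_grouped T X lam \<sigma>"
    and W: "\<forall>F. play_grouped \<sigma> F \<longrightarrow> \<not> bob_wins_grouped X lam F"
    using assms unfolding alice_wins_grouped_menger_def by blast
  have pos: "\<And>s. lam s > 0" using A by (auto simp: alice_strategy_grouped_def)
  define \<tau> where "\<tau> us = gC lam \<sigma> (gH lam \<sigma> us)" for us
  have "alice_strategy_G1KO T X \<tau>"
    using kcover[OF A] unfolding alice_strategy_G1KO_def \<tau>_def by blast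
  moreover have "\<forall>U. play_G1KO \<tau> U \<longrightarrow> \<Union>(range U) \<noteq> X"
  proof (intro allI impI)
    fix U assume P: "play_G1KO \<tau> U"
    define hist where "hist n = gH lam \<sigma> (map U [0..<n])" for n
    define r where "r n = gdec lam \<sigma> (hist n) (U n)" for n
    have hS: "hist (Suc n) = hist n @ r n" for n
      unfolding hist_def gH_def r_def by simp
    have h0: "hist 0 = []" unfolding hist_def gH_def by simp
    have dec: "r n \<in> gR \<sigma> (hist n) (lam (hist n)) \<and> gV (r n) = U n" for n
    proof -
      have "U n \<in> gC lam \<sigma> (hist n)" using P unfolding play_G1KO_def \<tau>_def hist_def by blast
      then have "\<exists>r. r \<in> gR \<sigma> (hist n) (lam (hist n)) \<and> gV r = U n"
        unfolding gC_def by blast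
      then show ?thesis unfolding r_def gdec_def by (rule someI_ex)
    qed
    have rlen: "length (r n) = lam (hist n)" for n using dec[of n] by (simp add: gR_def)
    have lenS: "length (hist (Suc n)) = length (hist n) + lam (hist n)" for n
      using hS rlen by simp
    have lenge: "n \<le> length (hist n)" for n
    proof (induction n)
      case 0 then show ?case by simp
    next
      case (Suc n) then show ?case using lenS[of n] pos[of "hist n"] by simp
    qed
    have mono: "\<exists>t. hist m' = hist m @ t" if "m \<le> m'" for m m'
      using that
    proof (induction m' rule: dec_induct)
      case base then show ?case by simp
    next
      case (step k) then show ?case using hS[of k] by auto
    qed
    define F where "F i = hist (Suc i) ! i" for i
    have Fnth: "hist m ! i = F i" if "i < length (hist m)" for m i
    proof (cases "m \<le> Suc i")
      case True
      then obtain t where "hist (Suc i) = hist m @ t" using mono by blast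
      then show ?thesis using that unfolding F_def by (simp add: nth_append)
    next
      case False
      then obtain t where "hist m = hist (Suc i) @ t" using mono[of "Suc i" m] by auto
      moreover have "i < length (hist (Suc i))" using lenge[of "Suc i"] by simp
      ultimately show ?thesis unfolding F_def by (simp add: nth_append)
    qed
    have tk: "map F [0..<k] = take k (hist m)" if "k \<le> length (hist m)" for k m
      using that by (intro nth_equalityI) (auto simp: Fnth)
    have L: "grp_L lam F n = length (hist n)" for n
    proof (induction n)
      case 0 then show ?case by (simp add: h0)
    next
      case (Suc n)
      have "map F [0..<length (hist n)] = hist n" using tk[of "length (hist n)" n] by simp
      then show ?case using Suc lenS[of n] by simp
    qed
    have Fr: "F i = r n ! (i - length (hist n))"
      if "length (hist n) \<le> i" "i < length (hist (Suc n))" for i n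
      using that Fnth[of i "Suc n"] hS[of n] by (simp add: nth_append)
    have play: "play_grouped \<sigma> F"
      unfolding play_grouped_def
    proof
      fix i
      define n where "n = (LEAST n. i < length (hist (Suc n)))"
      have ex: "i < length (hist (Suc i))" using lenge[of "Suc i"] by simp
      have n1: "i < length (hist (Suc n))" unfolding n_def by (rule LeastI[where P="\<lambda>n. i < length (hist (Suc n))", OF ex])
      have n2: "length (hist n) \<le> i"
      proof (cases n)
        case 0 then show ?thesis by (simp add: h0)
      next
        case (Suc m)
        have "\<not> i < length (hist (Suc m))"
          using not_less_Least[of m "\<lambda>n. i < length (hist (Suc n))"] Suc unfolding n_def by simp
        then show ?thesis using Suc by simp
      qed
      define j where "j = i - length (hist n)"
      have j: "j < lam (hist n)" using n1 n2 lenS[of n] unfolding j_def by simp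
      have Fi: "F i = r n ! j" using Fr[OF n2 n1] unfolding j_def .
      have "map F [0..<i] = take i (hist (Suc n))" using tk[of i "Suc n"] n1 by simp
      also have "\<dots> = hist n @ take j (r n)" using hS[of n] n2 unfolding j_def by simp
      finally have mF: "map F [0..<i] = hist n @ take j (r n)" .
      show "finite (F i) \<and> F i \<subseteq> \<sigma> (map F [0..<i])"
        using dec[of n] j unfolding Fi mF gR_def by auto
    qed
    have round: "(\<Inter>i\<in>{grp_L lam F n..<grp_L lam F (Suc n)}. \<Union>(F i)) = U n" for n
    proof -
      let ?a = "length (hist n)"
      have "(\<lambda>i. \<Union>(F i)) ` {grp_L lam F n..<grp_L lam F (Suc n)} = Union ` set (r n)"
      proof
        show "(\<lambda>i. \<Union>(F i)) ` {grp_L lam F n..<grp_L lam F (Suc n)} \<subseteq> Union ` set (r n)"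
        proof
          fix x assume "x \<in> (\<lambda>i. \<Union>(F i)) ` {grp_L lam F n..<grp_L lam F (Suc n)}"
          then obtain i where i: "?a \<le> i" "i < length (hist (Suc n))" "x = \<Union>(F i)"
            unfolding L by auto
          then have "i - ?a < length (r n)" using lenS[of n] rlen[of n] by simp
          then show "x \<in> Union ` set (r n)" using Fr[OF i(1,2)] i(3) by auto
        qed
      next
        show "Union ` set (r n) \<subseteq> (\<lambda>i. \<Union>(F i)) ` {grp_L lam F n..<grp_L lam F (Suc n)}"
        proof
          fix x assume "x \<in> Union ` set (r n)"
          then obtain j where j: "j < length (r n)" "x = \<Union>(r n ! j)"
            by (auto simp: in_set_conv_nth)
          have i: "?a \<le> ?a + j" "?a + j < length (hist (Suc n))" using j lenS[of n] rlen[of n] by auto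
          have "x = \<Union>(F (?a + j))" using Fr[OF i] j by simp
          then show "x \<in> (\<lambda>i. \<Union>(F i)) ` {grp_L lam F n..<grp_L lam F (Suc n)}"
            using i unfolding L by auto
        qed
      qed
      then show ?thesis using dec[of n] unfolding gV_def by (metis (no_types, lifting))
    qed
    have "\<not> bob_wins_grouped X lam F" using W play by blast
    then show "\<Union>(range U) \<noteq> X" unfolding bob_wins_grouped_def round by simp
  qed
  ultimately show ?thesis unfolding alice_wins_G1KO_def by blast
qed

theorem mainTheorem4:
  fixes Y :: "(nat \<Rightarrow> bool) set"
  assumes "consonant Y"
  shows "\<not> alice_wins_grouped_menger cantor_space (UNIV - Y)"
  using assms grouped_to_G1 unfolding consonant_def by blast

end
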